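(* Let $\mathbf X$ be a random vector with values in $[0,\infty)^n$ such that $\mathbf X\in\mathrm{MRV}_\gamma(\Psi)$ for some $\gamma>0$ and some Borel probability measure $\Psi$ on $\Delta_n$, and suppose $\mathbf X$ has a strictly positive joint density on its support. Let $\mathbf w\in\Delta_n$ with $\eta_{\mathbf w}>0$, where $\eta_{\mathbf x}=\int_{\Delta_n}(\mathbf x^\top\mathbf s)^\gamma\,\Psi(\mathrm d\mathbf s)$ for $\mathbf x\in[0,\infty)^n$, and assume $\eta_{\mathbf e_i}>0$ for $i=1,\dots,n$. Then $$\lim_{\alpha\downarrow0}\mathrm{DQ}^{\mathrm{VaR}}_\alpha(\mathbf w\odot\mathbf X)=f(\mathbf w):=\frac{\eta_{\mathbf w}}{\left(\sum_{i=1}^nw_i\,\eta_{\mathbf e_i}^{1/\gamma}\right)^{\gamma}}.$$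
   Context: Let $(\Omega,\mathcal F,\mathbb P)$ be an atomless probability space. For $\alpha\in[0,1)$ and a random variable $X$, $\mathrm{VaR}_\alpha(X)=\inf\{x\in\mathbb R:\mathbb P(X\le x)\ge 1-\alpha\}$. For $\alpha\in(0,1)$ and $\mathbf X=(X_1,\dots,X_n)$, $\mathrm{DQ}^{\mathrm{VaR}}_\alpha(\mathbf X)=\alpha^*/\alpha$, where $\alpha^*=\inf\{\beta\in(0,1):\mathrm{VaR}_\beta(\sum_{i=1}^nX_i)\le\sum_{i=1}^n\mathrm{VaR}_\alpha(X_i)\}$, with $\inf\emptyset=1$. $\Delta_n=\{\mathbf x\in[0,1]^n:x_1+\dots+x_n=1\}$ (the unit $L_1$-sphere intersected with the nonnegative orthant), $\mathbf e_1,\dots,\mathbf e_n$ are the standard basis vectors, and $\mathbf w\odot\mathbf X=(w_1X_1,\dots,w_nX_n)$. A random vector $\mathbf X$ with values in $[0,\infty)^n$ is multivariate regularly varying with tail index $\gamma>0$ and spectral measure $\Psi$ (a Borel probability measure on $\Delta_n$), written $\mathbf X\in\mathrm{MRV}_\gamma(\Psi)$, if for every $t>0$ and every Borel $S\subseteq\Delta_n$ with $\Psi(\partial S)=0$, $$\lim_{x\to\infty}\frac{\mathbb P(\|\mathbf X\|>tx,\ \mathbf X/\|\mathbf X\|\in S)}{\mathbb P(\|\mathbf X\|>x)}=t^{-\gamma}\Psi(S),$$ where $\|\cdot\|$ is the $L_1$-norm. *)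

theory Defs
  imports "HOL-Probability.Probability"
begin

definition VaR :: "'a measure \<Rightarrow> real \<Rightarrow> ('a \<Rightarrow> real) \<Rightarrow> real" where
  "VaR M \<alpha> Y = Inf {x. measure M {\<omega> \<in> space M. Y \<omega> \<le> x} \<ge> 1 - \<alpha>}"

definition DQ_VaR :: "'a measure \<Rightarrow> real \<Rightarrow> ('a \<Rightarrow> real ^ 'n) \<Rightarrow> real" where
  "DQ_VaR M \<alpha> Y =
     (let A = {\<beta> \<in> {0<..<1}. VaR M \<beta> (\<lambda>\<omega>. \<Sum>i\<in>UNIV. Y \<omega> $ i)
                              \<le> (\<Sum>i\<in>UNIV. VaR M \<alpha> (\<lambda>\<omega>. Y \<omega> $ i))}
      in (if A = {} then 1 else Inf A) / \<alpha>)"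

definition atomless :: "'a measure \<Rightarrow> bool" where
  "atomless M \<longleftrightarrow> (\<forall>A \<in> sets M. measure M A > 0 \<longrightarrow>
      (\<exists>B \<in> sets M. B \<subseteq> A \<and> 0 < measure M B \<and> measure M B < measure M A))"

definition unit_simplex :: "(real ^ 'n) set" where
  "unit_simplex = {x. (\<forall>i. 0 \<le> x $ i) \<and> (\<Sum>i\<in>UNIV. x $ i) = 1}"

definition L1norm :: "real ^ 'n \<Rightarrow> real" where
  "L1norm x = (\<Sum>i\<in>UNIV. \<bar>x $ i\<bar>)"

definition MRV :: "'a measure \<Rightarrow> ('a \<Rightarrow> real ^ 'n) \<Rightarrow> real \<Rightarrow> (real ^ 'n) measure \<Rightarrow> bool" where
  "MRV M X \<gamma> \<Psi> \<longleftrightarrow> 0 < \<gamma> \<and> prob_space \<Psi> \<and> sets \<Psi> = sets (restrict_space borel unit_simplex) \<and>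
     (\<forall>t > 0. \<forall>S \<in> sets \<Psi>. measure \<Psi> ((top_of_set unit_simplex) frontier_of S) = 0 \<longrightarrow>
        ((\<lambda>x. measure M {\<omega> \<in> space M. L1norm (X \<omega>) > t * x \<and> X \<omega> /\<^sub>R L1norm (X \<omega>) \<in> S}
              / measure M {\<omega> \<in> space M. L1norm (X \<omega>) > x})
          \<longlongrightarrow> t powr (-\<gamma>) * measure \<Psi> S) at_top)"

definition eta :: "(real ^ 'n) measure \<Rightarrow> real \<Rightarrow> real ^ 'n \<Rightarrow> real" where
  "eta \<Psi> \<gamma> x = (\<integral>s. (x \<bullet> s) powr \<gamma> \<partial>\<Psi>)"

definition support :: "'a measure \<Rightarrow> ('a \<Rightarrow> real ^ 'n) \<Rightarrow> (real ^ 'n) set" where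
  "support M X = {x. \<forall>e > 0. measure (distr M borel X) (ball x e) > 0}"

definition hadamard :: "real ^ 'n \<Rightarrow> ('a \<Rightarrow> real ^ 'n) \<Rightarrow> ('a \<Rightarrow> real ^ 'n)" where
  "hadamard w X = (\<lambda>\<omega>. \<chi> i. w $ i * X \<omega> $ i)"

end

theory Submission
  imports Defs
begin
lemma VaR_props:
  fixes M :: "'a measure" and Y :: "'a \<Rightarrow> real"
  assumes P: "prob_space M" and Y: "Y \<in> borel_measurable M" and nn: "\<forall>\<omega>\<in>space M. 0 \<le> Y \<omega>"
    and a: "0 < \<alpha>" "\<alpha> < 1"
  shows "0 \<le> VaR M \<alpha> Y"
    and "measure M {\<omega>\<in>space M. Y \<omega> > VaR M \<alpha> Y} \<le> \<alpha>"
    and "\<And>x. x < VaR M \<alpha> Y \<Longrightarrow> measure M {\<omega>\<in>space M. Y \<omega> > x} > \<alpha>"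
proof -
  interpret prob_space M by fact
  define N where "N = distr M borel Y"
  interpret N: real_distribution N unfolding N_def using real_distribution_distr Y by simp
  define F where "F x = measure M {\<omega>\<in>space M. Y \<omega> \<le> x}" for x
  have cdfF: "cdf N x = F x" for x
    unfolding cdf_def N_def F_def using Y
    by (subst measure_distr) (auto intro!: arg_cong[where f="measure M"])
  have compl: "measure M {\<omega>\<in>space M. Y \<omega> > x} = 1 - F x" for x
  proof -
    have "{\<omega>\<in>space M. Y \<omega> > x} = space M - {\<omega>\<in>space M. Y \<omega> \<le> x}" by auto
    then show ?thesis unfolding F_def using Y
      by (simp add: prob_compl)
  qed
  define Q where "Q = {x. F x \<ge> 1 - \<alpha>}"
  have V: "VaR M \<alpha> Y = Inf Q" unfolding VaR_def Q_def F_def ..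
  have lb: "\<And>x. x \<in> Q \<Longrightarrow> 0 \<le> x"
  proof (rule ccontr)
    fix x assume "x \<in> Q" "\<not> 0 \<le> x"
    then have "{\<omega>\<in>space M. Y \<omega> \<le> x} = {}" using nn by force
    then have "F x = 0" unfolding F_def by (metis measure_empty)
    with \<open>x \<in> Q\<close> a show False unfolding Q_def by simp
  qed
  have "(F \<longlongrightarrow> 1) at_top" using N.cdf_lim_at_top_prob unfolding cdfF[abs_def] .
  then have "eventually (\<lambda>x. F x > 1 - \<alpha>) at_top" using a by (auto intro: order_tendstoD)
  then obtain x0 where "F x0 > 1 - \<alpha>" by (auto simp: eventually_at_top_linorder)
  then have "x0 \<in> Q" unfolding Q_def by simp
  then have ne: "Q \<noteq> {}" by blast
  have bdd: "bdd_below Q" unfolding bdd_below_def using lb by blast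
  show "0 \<le> VaR M \<alpha> Y" unfolding V using lb ne by (intro cInf_greatest) auto
  have mono: "x \<le> y \<Longrightarrow> F x \<le> F y" for x y using N.cdf_nondecreasing cdfF by metis
  have "F (Inf Q) \<ge> 1 - \<alpha>"
  proof -
    have "((\<lambda>x. F x) \<longlongrightarrow> F (Inf Q)) (at_right (Inf Q))"
      using N.cdf_is_right_cont[of "Inf Q"] unfolding cdfF[abs_def] continuous_within by simp
    moreover have "eventually (\<lambda>x. F x \<ge> 1 - \<alpha>) (at_right (Inf Q))"
    proof -
      have "\<forall>x>Inf Q. F x \<ge> 1 - \<alpha>"
      proof safe
        fix x assume "x > Inf Q"
        then obtain y where "y \<in> Q" "y < x" using cInf_lessD[OF ne] by blast
        then show "F x \<ge> 1 - \<alpha>" using mono[of y x] unfolding Q_def by auto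
      qed
      then show ?thesis unfolding eventually_at_right_field using gt_ex[of "Inf Q"] by blast
    qed
    ultimately show ?thesis by (intro tendsto_lowerbound) auto
  qed
  then show "measure M {\<omega>\<in>space M. Y \<omega> > VaR M \<alpha> Y} \<le> \<alpha>" unfolding V compl by simp
  fix x assume "x < VaR M \<alpha> Y"
  then have "x \<notin> Q" using bdd cInf_lower unfolding V by force
  then show "measure M {\<omega>\<in>space M. Y \<omega> > x} > \<alpha>" unfolding compl Q_def by simp
qed

lemma squeeze_eps:
  fixes r :: "'b \<Rightarrow> real"
  assumes "\<And>\<epsilon>. \<epsilon> > 0 \<Longrightarrow> \<exists>lo up fl fu. L - \<epsilon> \<le> lo \<and> up \<le> L + \<epsilon> \<and> (fl \<longlongrightarrow> lo) F \<and> (fu \<longlongrightarrow> up) F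
      \<and> eventually (\<lambda>x. fl x \<le> r x \<and> r x \<le> fu x) F"
  shows "(r \<longlongrightarrow> L) F"
proof (rule order_tendstoI)
  fix c assume "c < L"
  then obtain lo up :: real and fl fu where h: "L - (L - c)/2 \<le> lo" "(fl \<longlongrightarrow> lo) F" "eventually (\<lambda>x. fl x \<le> r x \<and> r x \<le> fu x) F"
    using assms[of "(L - c)/2"] by auto
  have "c < lo" using h(1) \<open>c < L\<close> by (simp add: field_simps)
  then have "eventually (\<lambda>x. fl x > c) F" by (rule order_tendstoD(1)[OF h(2)])
  with h(3) show "eventually (\<lambda>x. c < r x) F" by eventually_elim auto
next
  fix c assume "c > L"
  then obtain lo up :: real and fl fu where h: "up \<le> L + (c - L)/2" "(fu \<longlongrightarrow> up) F" "eventually (\<lambda>x. fl x \<le> r x \<and> r x \<le> fu x) F"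
    using assms[of "(c - L)/2"] by auto
  have "up < c" using h(1) \<open>c > L\<close> by (simp add: field_simps)
  then have "eventually (\<lambda>x. fu x < c) F" by (rule order_tendstoD(2)[OF h(2)])
  with h(3) show "eventually (\<lambda>x. r x < c) F" by eventually_elim auto
qed

lemma L1norm_nonneg: "0 \<le> L1norm x" unfolding L1norm_def by (simp add: sum_nonneg)

lemma abs_le_L1norm: "\<bar>x $ i\<bar> \<le> L1norm x"
  unfolding L1norm_def by (rule member_le_sum) auto

lemma L1norm_zero: "L1norm x = 0 \<Longrightarrow> x = 0"
  using abs_le_L1norm[of x] by (metis abs_le_zero_iff vec_eq_iff zero_index)

lemma scale_in_simplex:
  assumes "\<forall>i. 0 \<le> x $ i" "L1norm x > 0"
  shows "x /\<^sub>R L1norm x \<in> unit_simplex"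
proof -
  have "L1norm x = (\<Sum>i\<in>UNIV. x $ i)" unfolding L1norm_def using assms by simp
  then show ?thesis unfolding unit_simplex_def using assms
    by (auto simp: divide_simps sum_divide_distrib[symmetric])
qed

lemma inner_scale_L1: "L1norm x * (v \<bullet> (x /\<^sub>R L1norm x)) = v \<bullet> x"
proof (cases "L1norm x = 0")
  case True then have "x = 0" using L1norm_zero by blast
  then show ?thesis using True by simp
next
  case False then show ?thesis by (simp add: inner_scaleR_right)
qed

lemma inner_simplex_bounds:
  assumes "\<forall>i. 0 \<le> v $ i \<and> v $ i \<le> 1" "s \<in> unit_simplex"
  shows "0 \<le> v \<bullet> s" "v \<bullet> s \<le> 1"
proof -
  have s: "\<forall>i. 0 \<le> s $ i" "(\<Sum>i\<in>UNIV. s $ i) = 1" using assms(2) unfolding unit_simplex_def by auto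
  show "0 \<le> v \<bullet> s" unfolding inner_vec_def using assms(1) s by (auto intro!: sum_nonneg)
  have "v \<bullet> s \<le> (\<Sum>i\<in>UNIV. s $ i)" unfolding inner_vec_def using assms(1) s
    by (intro sum_mono) (auto intro: mult_left_le_one_le)
  then show "v \<bullet> s \<le> 1" using s by simp
qed

lemma closed_unit_simplex: "closed (unit_simplex :: (real^'n) set)"
proof -
  have "unit_simplex = (\<Inter>i. {x::real^'n. 0 \<le> x $ i}) \<inter> {x. (\<Sum>i\<in>UNIV. x $ i) = 1}"
    unfolding unit_simplex_def by auto
  moreover have "closed {x::real^'n. (\<Sum>i\<in>UNIV. x $ i) = 1}"
    by (intro closed_Collect_eq continuous_intros)
  moreover have "closed {x::real^'n. 0 \<le> x $ i}" for i
    by (intro closed_Collect_le continuous_intros)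
  ultimately show ?thesis by (metis (no_types, lifting) closed_INT closed_Int)
qed

lemma frontier_level:
  fixes g :: "'b::topological_space \<Rightarrow> real"
  assumes "continuous_on T g"
  shows "(top_of_set T) frontier_of {\<theta>\<in>T. a < g \<theta> \<and> g \<theta> \<le> b} \<subseteq> {\<theta>\<in>T. g \<theta> = a} \<union> {\<theta>\<in>T. g \<theta> = b}"
proof -
  have C: "closedin (top_of_set T) (T \<inter> g -` {a..b})"
    by (rule continuous_closedin_preimage[OF assms]) auto
  have O: "openin (top_of_set T) (T \<inter> g -` {a<..<b})"
    by (rule continuous_openin_preimage_gen[OF assms]) auto
  have "(top_of_set T) closure_of {\<theta>\<in>T. a < g \<theta> \<and> g \<theta> \<le> b} \<subseteq> T \<inter> g -` {a..b}"
    by (rule closure_of_minimal[OF _ C]) auto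
  moreover have "T \<inter> g -` {a<..<b} \<subseteq> (top_of_set T) interior_of {\<theta>\<in>T. a < g \<theta> \<and> g \<theta> \<le> b}"
    by (rule interior_of_maximal[OF _ O]) auto
  ultimately show ?thesis unfolding frontier_of_def by force
qed

lemma continuous_L1norm: "continuous_on UNIV (L1norm :: real^'n \<Rightarrow> real)"
  unfolding L1norm_def[abs_def] by (intro continuous_intros)

lemma L1norm_borel[measurable]: "(L1norm :: real^'n \<Rightarrow> real) \<in> borel_measurable borel"
  using continuous_L1norm by (rule borel_measurable_continuous_onI)

locale mrv_ctx =
  fixes M :: "'a measure" and X :: "'a \<Rightarrow> real^'n" and \<gamma> :: real and \<Psi> :: "(real^'n) measure"
  assumes P: "prob_space M" and Xm[measurable]: "X \<in> borel_measurable M"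
    and nn: "\<forall>\<omega>\<in>space M. \<forall>i. 0 \<le> X \<omega> $ i" and mrv: "MRV M X \<gamma> \<Psi>"
begin

interpretation prob_space M by (rule P)

lemma gamma_pos: "0 < \<gamma>" using mrv unfolding MRV_def by auto
lemma PsiP: "prob_space \<Psi>" using mrv unfolding MRV_def by auto
lemma sets_Psi: "sets \<Psi> = sets (restrict_space borel unit_simplex)" using mrv unfolding MRV_def by auto
lemma space_Psi: "space \<Psi> = unit_simplex"
  using sets_eq_imp_space_eq[OF sets_Psi] by (simp add: space_restrict_space)

lemma mrv_lim:
  assumes "t > 0" "S \<in> sets \<Psi>" "measure \<Psi> ((top_of_set unit_simplex) frontier_of S) = 0"
  shows "((\<lambda>x. measure M {\<omega> \<in> space M. L1norm (X \<omega>) > t * x \<and> X \<omega> /\<^sub>R L1norm (X \<omega>) \<in> S}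
              / measure M {\<omega> \<in> space M. L1norm (X \<omega>) > x})
          \<longlongrightarrow> t powr (-\<gamma>) * measure \<Psi> S) at_top"
  using mrv assms unfolding MRV_def by blast

lemma R_meas[measurable]: "(\<lambda>\<omega>. L1norm (X \<omega>)) \<in> borel_measurable M"
  by measurable

lemma Theta_meas[measurable]: "(\<lambda>\<omega>. X \<omega> /\<^sub>R L1norm (X \<omega>)) \<in> borel_measurable M"
  by measurable

lemma theta_simplex: "\<omega> \<in> space M \<Longrightarrow> L1norm (X \<omega>) > 0 \<Longrightarrow> X \<omega> /\<^sub>R L1norm (X \<omega>) \<in> unit_simplex"
  using nn scale_in_simplex by blast

definition V where "V x = measure M {\<omega>\<in>space M. L1norm (X \<omega>) > x}"

lemma simplex_sets: "unit_simplex \<in> sets \<Psi>"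
  using sets.top[of \<Psi>] space_Psi by simp

lemma frontier_simplex: "(top_of_set unit_simplex) frontier_of unit_simplex = {}"
  by (metis frontier_of_topspace topspace_euclidean_subtopology)

lemma V_ratio:
  assumes "t > 0"
  shows "((\<lambda>x. V (t * x) / V x) \<longlongrightarrow> t powr (-\<gamma>)) at_top"
proof -
  have "((\<lambda>x. measure M {\<omega> \<in> space M. L1norm (X \<omega>) > t * x \<and> X \<omega> /\<^sub>R L1norm (X \<omega>) \<in> unit_simplex}
              / measure M {\<omega> \<in> space M. L1norm (X \<omega>) > x})
          \<longlongrightarrow> t powr (-\<gamma>) * measure \<Psi> unit_simplex) at_top"
    by (rule mrv_lim[OF assms simplex_sets]) (simp add: frontier_simplex)
  moreover have "measure \<Psi> unit_simplex = 1"
    using prob_space.prob_space[OF PsiP] space_Psi by simp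
  moreover have "eventually (\<lambda>x. measure M {\<omega> \<in> space M. L1norm (X \<omega>) > t * x \<and> X \<omega> /\<^sub>R L1norm (X \<omega>) \<in> unit_simplex}
              / measure M {\<omega> \<in> space M. L1norm (X \<omega>) > x} = V (t * x) / V x) at_top"
  proof (rule eventually_mono[OF eventually_ge_at_top[of 0]])
    fix x :: real assume "0 \<le> x"
    then have tx: "0 \<le> t * x" using assms by simp
    have "{\<omega> \<in> space M. L1norm (X \<omega>) > t * x \<and> X \<omega> /\<^sub>R L1norm (X \<omega>) \<in> unit_simplex}
       = {\<omega> \<in> space M. L1norm (X \<omega>) > t * x}"
      by (auto intro: theta_simplex[OF _ le_less_trans[OF tx]])
    then show "measure M {\<omega> \<in> space M. L1norm (X \<omega>) > t * x \<and> X \<omega> /\<^sub>R L1norm (X \<omega>) \<in> unit_simplex}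
              / measure M {\<omega> \<in> space M. L1norm (X \<omega>) > x} = V (t * x) / V x"
      unfolding V_def by simp
  qed
  ultimately show ?thesis using tendsto_cong by fastforce
qed

lemma V_pos: "eventually (\<lambda>x. V x > 0) at_top"
proof -
  have "((\<lambda>x. V (1 * x) / V x) \<longlongrightarrow> 1 powr (-\<gamma>)) at_top" by (rule V_ratio) simp
  then have "((\<lambda>x. V x / V x) \<longlongrightarrow> 1) at_top" by simp
  then have "eventually (\<lambda>x. V x / V x > 0) at_top" by (rule order_tendstoD) simp
  moreover have "V x \<ge> 0" for x unfolding V_def by simp
  ultimately show ?thesis by (auto elim!: eventually_mono simp: less_eq_real_def split: if_splits)
qed

lemma V_mono: "x \<le> y \<Longrightarrow> V y \<le> V x"
  unfolding V_def by (intro finite_measure_mono) auto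

end

lemma interval_find:
  fixes a :: "nat \<Rightarrow> real"
  assumes "a 0 < y" "y \<le> a m"
  shows "\<exists>j<m. a j < y \<and> y \<le> a (Suc j)"
  using assms
proof (induction m)
  case 0 then show ?case by simp
next
  case (Suc m)
  show ?case
  proof (cases "y \<le> a m")
    case True then show ?thesis using Suc by (meson less_SucI)
  next
    case False then show ?thesis using Suc by auto
  qed
qed

lemma powr_inv_powr: "0 \<le> y \<Longrightarrow> 0 < (\<gamma>::real) \<Longrightarrow> (y powr (1/\<gamma>)) powr \<gamma> = y"
  by (simp add: powr_powr powr_one)

context mrv_ctx
begin

interpretation prob_space M by (rule P)
interpretation Psi: prob_space \<Psi> by (rule PsiP)

lemma closed_simplex_sets: "unit_simplex \<in> sets borel"
  using closed_unit_simplex by (rule borel_closed)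

lemma in_sets_Psi: "T \<in> sets borel \<Longrightarrow> T \<subseteq> unit_simplex \<Longrightarrow> T \<in> sets \<Psi>"
  unfolding sets_Psi using closed_simplex_sets by (subst sets_restrict_space_iff) auto

lemma meas_Psi: "g \<in> borel_measurable borel \<Longrightarrow> g \<in> borel_measurable \<Psi>"
proof -
  assume "g \<in> borel_measurable borel"
  then have "g \<in> borel_measurable (restrict_space borel unit_simplex)"
    by (rule measurable_restrict_space1)
  then show ?thesis by (simp only: measurable_cong_sets[OF sets_Psi refl])
qed

lemma null_level:
  fixes g :: "real^'n \<Rightarrow> real"
  assumes g: "g \<in> borel_measurable borel" and "u < v"
  shows "\<exists>c\<in>{u<..<v}. measure \<Psi> {\<theta>\<in>unit_simplex. g \<theta> = c} = 0"
proof -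
  have gm: "g \<in> measurable \<Psi> borel" using meas_Psi[OF g] .
  interpret D: finite_measure "distr \<Psi> borel g" by (rule Psi.finite_measure_distr[OF gm])
  have cnt: "countable {x. measure (distr \<Psi> borel g) {x} \<noteq> 0}" by (rule D.countable_support)
  have "uncountable {u<..<v}" using \<open>u < v\<close> by (simp add: uncountable_open_interval)
  then have "\<not> {u<..<v} \<subseteq> {x. measure (distr \<Psi> borel g) {x} \<noteq> 0}"
    using cnt countable_subset by blast
  then obtain c where c: "c \<in> {u<..<v}" "c \<notin> {x. measure (distr \<Psi> borel g) {x} \<noteq> 0}"
    by blast
  have "measure (distr \<Psi> borel g) {c} = measure \<Psi> (g -` {c} \<inter> space \<Psi>)"
    by (rule measure_distr[OF gm]) simp
  also have "g -` {c} \<inter> space \<Psi> = {\<theta>\<in>unit_simplex. g \<theta> = c}" using space_Psi by auto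
  finally have "measure \<Psi> {\<theta>\<in>unit_simplex. g \<theta> = c} = 0" using c(2) by simp
  then show ?thesis using c(1) by blast
qed

lemma levels:
  fixes g :: "real^'n \<Rightarrow> real"
  assumes g: "g \<in> borel_measurable borel" and "\<epsilon> > 0"
  shows "\<exists>a m. strict_mono a \<and> 0 < a 0 \<and> 1 < a m \<and> a 0 powr \<gamma> \<le> \<epsilon>
     \<and> (\<forall>k. a (Suc k) powr \<gamma> - a k powr \<gamma> \<le> \<epsilon>)
     \<and> (\<forall>k. measure \<Psi> {\<theta>\<in>unit_simplex. g \<theta> = a k} = 0)"
proof -
  define h where "h = \<epsilon> / 2"
  have h: "h > 0" using assms unfolding h_def by simp
  have gp: "\<gamma> > 0" by (rule gamma_pos)
  have ex: "\<exists>c. (real k*h) powr (1/\<gamma>) < c \<and> c < ((real k+1)*h) powr (1/\<gamma>)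
          \<and> measure \<Psi> {\<theta>\<in>unit_simplex. g \<theta> = c} = 0" for k :: nat
  proof -
    have "(real k*h) powr (1/\<gamma>) < ((real k+1)*h) powr (1/\<gamma>)"
      using h gp by (intro powr_less_mono2) auto
    from null_level[OF g this] show ?thesis by auto
  qed
  have "\<forall>k::nat. \<exists>c. (real k*h) powr (1/\<gamma>) < c \<and> c < ((real k+1)*h) powr (1/\<gamma>)
          \<and> measure \<Psi> {\<theta>\<in>unit_simplex. g \<theta> = c} = 0" by (rule allI, rule ex)
  from choice[OF this] obtain a where a0: "\<forall>k::nat. (real k*h) powr (1/\<gamma>) < a k \<and> a k < ((real k+1)*h) powr (1/\<gamma>)
          \<and> measure \<Psi> {\<theta>\<in>unit_simplex. g \<theta> = a k} = 0" by blast
  have a: "\<And>k::nat. (real k*h) powr (1/\<gamma>) < a k" "\<And>k::nat. a k < ((real k+1)*h) powr (1/\<gamma>)"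
      "\<And>k. measure \<Psi> {\<theta>\<in>unit_simplex. g \<theta> = a k} = 0"
    using a0 by auto
  have apos: "0 < a k" for k
  proof -
    have "0 \<le> (real k*h) powr (1/\<gamma>)" by simp
    then show ?thesis using a(1)[of k] by linarith
  qed
  have lo: "real k*h < a k powr \<gamma>" for k :: nat
  proof -
    have "((real k*h) powr (1/\<gamma>)) powr \<gamma> < a k powr \<gamma>"
      using a(1)[of k] gp by (intro powr_less_mono2) auto
    then show ?thesis using powr_inv_powr[of "real k*h" \<gamma>] h gp by simp
  qed
  have hi: "a k powr \<gamma> < (real k+1)*h" for k :: nat
  proof -
    have "a k powr \<gamma> < (((real k+1)*h) powr (1/\<gamma>)) powr \<gamma>"
      using a(2)[of k] gp apos[of k] by (intro powr_less_mono2) (auto simp: less_imp_le)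
    then show ?thesis using powr_inv_powr[of "(real k+1)*h" \<gamma>] h gp by simp
  qed
  have sm: "strict_mono a" unfolding strict_mono_Suc_iff
  proof
    fix k
    have "real (Suc k) * h = (real k + 1) * h" by simp
    then have "a k powr \<gamma> < a (Suc k) powr \<gamma>" using hi[of k] lo[of "Suc k"] by linarith
    show "a k < a (Suc k)"
    proof (rule ccontr)
      assume "\<not> a k < a (Suc k)"
      then have "a (Suc k) \<le> a k" by simp
      from powr_mono2[OF less_imp_le[OF gp] less_imp_le[OF apos] this]
      show False using \<open>a k powr \<gamma> < a (Suc k) powr \<gamma>\<close> by linarith
    qed
  qed
  define m where "m = nat \<lceil>1/h\<rceil>"
  have "1/h \<le> real m" unfolding m_def by (rule real_nat_ceiling_ge)
  then have "1 \<le> real m * h" using h by (simp add: divide_le_eq)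
  then have "1 < a m powr \<gamma>" using lo[of m] by linarith
  then have "1 < a m"
  proof -
    assume A: "1 < a m powr \<gamma>"
    show "1 < a m"
    proof (rule ccontr)
      assume "\<not> 1 < a m"
      then have "a m \<le> 1" by simp
      from powr_mono2[OF less_imp_le[OF gp] less_imp_le[OF apos] this]
      show False using A by simp
    qed
  qed
  moreover have "a 0 powr \<gamma> \<le> \<epsilon>" using hi[of 0] h_def assms by simp
  moreover have "a (Suc k) powr \<gamma> - a k powr \<gamma> \<le> \<epsilon>" for k
  proof -
    have e1: "(real (Suc k) + 1) * h = real k * h + 2 * h" by (simp add: algebra_simps)
    have "\<epsilon> = 2 * h" using h_def by simp
    then show ?thesis using hi[of "Suc k"] lo[of k] e1 by linarith
  qed
  ultimately show ?thesis using sm apos a(3) by (intro exI[of _ a] exI[of _ m]) blast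
qed

end

lemma sum_ind_one:
  fixes c :: "nat \<Rightarrow> real"
  assumes "\<forall>k. s \<in> S k \<longleftrightarrow> k = j" "j < m"
  shows "(\<Sum>k<m. c k * indicator (S k) s) = c j"
proof -
  have "(\<Sum>k<m. c k * indicator (S k) s) = (\<Sum>k\<in>{..<m}. if k = j then c k else 0)"
    by (rule sum.cong) (use assms(1) in \<open>auto simp: indicator_def\<close>)
  also have "\<dots> = c j" using assms(2) by simp
  finally show ?thesis .
qed

lemma sum_ind_none:
  fixes c :: "nat \<Rightarrow> real"
  assumes "\<forall>k. s \<notin> S k"
  shows "(\<Sum>k<m. c k * indicator (S k) s) = 0"
  using assms by (simp add: indicator_def)

lemma div_lt_aux:
  fixes x r y c :: real
  assumes "0 < y" "y \<le> c" "0 \<le> r" "x < r * y"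
  shows "(1/c) * x < r"
proof -
  have "r * y \<le> r * c" using assms by (intro mult_left_mono) auto
  then have "x < r * c" using assms by linarith
  moreover have "c > 0" using assms by linarith
  ultimately show ?thesis by (simp add: pos_divide_less_eq)
qed

lemma div_lt_aux2:
  fixes x r a :: real
  assumes "0 < a" "(1/a) * x < r"
  shows "x < r * a"
  using assms by (simp add: pos_divide_less_eq)

lemma inv_powr_neg: "0 < a \<Longrightarrow> (1 / a) powr (-\<gamma>) = a powr (\<gamma>::real)"
  by (simp add: powr_minus_divide powr_divide)

context mrv_ctx
begin

interpretation prob_space M by (rule P)
interpretation Psi: prob_space \<Psi> by (rule PsiP)

lemma simplex_pred_borel: "{\<theta>. P \<theta>} \<in> sets borel \<Longrightarrow> {\<theta>\<in>unit_simplex. P \<theta>} \<in> sets borel"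
proof -
  assume A: "{\<theta>. P \<theta>} \<in> sets borel"
  have "{\<theta>\<in>unit_simplex. P \<theta>} = unit_simplex \<inter> {\<theta>. P \<theta>}" by auto
  then show ?thesis using A closed_simplex_sets by (metis sets.Int)
qed

lemma null_cover:
  assumes "F \<subseteq> N1 \<union> N2" "N1 \<in> sets \<Psi>" "N2 \<in> sets \<Psi>" "measure \<Psi> N1 = 0" "measure \<Psi> N2 = 0"
  shows "measure \<Psi> F = 0"
proof (cases "F \<in> sets \<Psi>")
  case True
  have "measure \<Psi> F \<le> measure \<Psi> (N1 \<union> N2)" using assms by (intro Psi.finite_measure_mono) auto
  also have "\<dots> \<le> measure \<Psi> N1 + measure \<Psi> N2" using assms by (intro measure_Un_le) auto
  finally show ?thesis using assms by (simp add: measure_le_0_iff)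
next
  case False then show ?thesis by (simp add: measure_notin_sets)
qed

lemma event_sets:
  assumes "S \<in> sets borel"
  shows "{\<omega>\<in>space M. c < L1norm (X \<omega>) \<and> X \<omega> /\<^sub>R L1norm (X \<omega>) \<in> S} \<in> sets M"
proof -
  have "{\<omega>\<in>space M. c < L1norm (X \<omega>) \<and> X \<omega> /\<^sub>R L1norm (X \<omega>) \<in> S}
     = {\<omega>\<in>space M. c < L1norm (X \<omega>)} \<inter> ((\<lambda>\<omega>. X \<omega> /\<^sub>R L1norm (X \<omega>)) -` S \<inter> space M)" by auto
  moreover have "{\<omega>\<in>space M. c < L1norm (X \<omega>)} \<in> sets M" by measurable
  moreover have "(\<lambda>\<omega>. X \<omega> /\<^sub>R L1norm (X \<omega>)) -` S \<inter> space M \<in> sets M"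
    using measurable_sets[OF Theta_meas assms] .
  ultimately show ?thesis by (metis sets.Int)
qed

theorem core:
  fixes g :: "real^'n \<Rightarrow> real"
  assumes gc: "continuous_on UNIV g" and g01: "\<And>\<theta>. \<theta>\<in>unit_simplex \<Longrightarrow> 0 \<le> g \<theta> \<and> g \<theta> \<le> 1"
  shows "((\<lambda>x. measure M {\<omega>\<in>space M. L1norm (X \<omega>) * g (X \<omega> /\<^sub>R L1norm (X \<omega>)) > x} / V x)
           \<longlongrightarrow> (\<integral>s. g s powr \<gamma> \<partial>\<Psi>)) at_top"
proof (rule squeeze_eps)
  have gb[measurable]: "g \<in> borel_measurable borel" using gc by (rule borel_measurable_continuous_onI)
  have gp: "\<gamma> > 0" by (rule gamma_pos)
  have gcs: "continuous_on unit_simplex g" using gc continuous_on_subset by blast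
  fix \<epsilon> :: real assume "\<epsilon> > 0"
  obtain a m where sm: "strict_mono a" and a0: "0 < a 0" and am: "1 < a m" and ae0: "a 0 powr \<gamma> \<le> \<epsilon>"
    and aeS: "\<And>k. a (Suc k) powr \<gamma> - a k powr \<gamma> \<le> \<epsilon>"
    and anull: "\<And>k. measure \<Psi> {\<theta>\<in>unit_simplex. g \<theta> = a k} = 0"
    using levels[OF gb \<open>\<epsilon> > 0\<close>] by blast
  have amono: "i \<le> j \<Longrightarrow> a i \<le> a j" for i j using sm by (simp add: strict_mono_less_eq)
  have apos: "0 < a k" for k using amono[of 0 k] a0 by simp
  define S where "S k = {\<theta>\<in>unit_simplex. a k < g \<theta> \<and> g \<theta> \<le> a (Suc k)}" for k
  define Sl where "Sl = {\<theta>\<in>unit_simplex. -1 < g \<theta> \<and> g \<theta> \<le> a 0}"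
  have S_borel: "S k \<in> sets borel" for k unfolding S_def by (rule simplex_pred_borel) measurable
  have Sl_borel: "Sl \<in> sets borel" unfolding Sl_def by (rule simplex_pred_borel) measurable
  have S_Psi: "S k \<in> sets \<Psi>" for k using S_borel by (rule in_sets_Psi) (auto simp: S_def)
  have Sl_Psi: "Sl \<in> sets \<Psi>" using Sl_borel by (rule in_sets_Psi) (auto simp: Sl_def)
  have lev_Psi: "{\<theta>\<in>unit_simplex. g \<theta> = c} \<in> sets \<Psi>" for c
  proof (rule in_sets_Psi)
    have "g -` {c} \<inter> space borel \<in> sets borel" by (rule measurable_sets[OF gb]) simp
    then have "{\<theta>. g \<theta> = c} \<in> sets borel" by (simp add: vimage_def)
    then show "{\<theta>\<in>unit_simplex. g \<theta> = c} \<in> sets borel" by (rule simplex_pred_borel)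
  qed auto
  have frS: "measure \<Psi> ((top_of_set unit_simplex) frontier_of (S k)) = 0" for k
  proof -
    have fr: "(top_of_set unit_simplex) frontier_of (S k) \<subseteq> {\<theta>\<in>unit_simplex. g \<theta> = a k} \<union> {\<theta>\<in>unit_simplex. g \<theta> = a (Suc k)}"
      unfolding S_def by (rule frontier_level[OF gcs])
    show ?thesis by (rule null_cover[OF fr lev_Psi lev_Psi anull anull])
  qed
  have frSl: "measure \<Psi> ((top_of_set unit_simplex) frontier_of Sl) = 0"
  proof -
    have "measure \<Psi> {\<theta>\<in>unit_simplex. g \<theta> = -1} = 0"
    proof -
      have e: "{\<theta>\<in>unit_simplex. g \<theta> = -1} = {}" using g01 by force
      show ?thesis unfolding e by simp
    qed
    moreover have fr: "(top_of_set unit_simplex) frontier_of Sl \<subseteq> {\<theta>\<in>unit_simplex. g \<theta> = -1} \<union> {\<theta>\<in>unit_simplex. g \<theta> = a 0}"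
      unfolding Sl_def by (rule frontier_level[OF gcs])
    ultimately show ?thesis using null_cover[OF fr lev_Psi lev_Psi _ anull] by blast
  qed
  have Sdisj: "s \<in> S k \<Longrightarrow> s \<in> S l \<Longrightarrow> k = l" for s k l
  proof (rule ccontr)
    assume "s \<in> S k" "s \<in> S l" "k \<noteq> l"
    then have "k < l \<or> l < k" by auto
    then show False
    proof
      assume "k < l" then have "a (Suc k) \<le> a l" using amono by simp
      then show False using \<open>s \<in> S k\<close> \<open>s \<in> S l\<close> unfolding S_def by auto
    next
      assume "l < k" then have "a (Suc l) \<le> a k" using amono by simp
      then show False using \<open>s \<in> S k\<close> \<open>s \<in> S l\<close> unfolding S_def by auto
    qed
  qed
  have classify: "(s \<in> Sl \<and> (\<forall>k. s \<notin> S k)) \<or> (\<exists>j<m. s \<in> S j \<and> s \<notin> Sl \<and> (\<forall>k. s \<in> S k \<longleftrightarrow> k = j))"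
    if s: "s \<in> unit_simplex" for s
  proof (cases "g s \<le> a 0")
    case True
    have "s \<in> Sl" using True g01[OF s] s unfolding Sl_def by auto
    moreover have "s \<notin> S k" for k using True amono[of 0 k] unfolding S_def by auto
    ultimately show ?thesis by blast
  next
    case False
    have "g s \<le> a m" using g01[OF s] am by simp
    then obtain j where j: "j < m" "a j < g s" "g s \<le> a (Suc j)"
      using interval_find[of a "g s" m] False by auto
    have "s \<in> S j" using j s unfolding S_def by auto
    moreover have "s \<notin> Sl" using False unfolding Sl_def by auto
    moreover have "\<forall>k. s \<in> S k \<longleftrightarrow> k = j" using Sdisj \<open>s \<in> S j\<close> by blast
    ultimately show ?thesis using j by blast
  qed
  define Lf where "Lf s = (\<Sum>k<m. a k powr \<gamma> * indicator (S k) s)" for s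
  define Uf where "Uf s = a 0 powr \<gamma> * indicator Sl s + (\<Sum>k<m. a (Suc k) powr \<gamma> * indicator (S k) s)" for s
  have pw: "Lf s \<le> g s powr \<gamma> \<and> g s powr \<gamma> \<le> Uf s \<and> Uf s \<le> Lf s + \<epsilon>" if s: "s \<in> unit_simplex" for s
    using classify[OF s]
  proof
    assume A: "s \<in> Sl \<and> (\<forall>k. s \<notin> S k)"
    then have "Lf s = 0" "Uf s = a 0 powr \<gamma>" unfolding Lf_def Uf_def by (simp_all add: sum_ind_none)
    moreover have "g s \<le> a 0" using A unfolding Sl_def by auto
    then have "g s powr \<gamma> \<le> a 0 powr \<gamma>" using g01[OF s] gp by (intro powr_mono2) auto
    ultimately show ?thesis using ae0 by simp
  next
    assume "\<exists>j<m. s \<in> S j \<and> s \<notin> Sl \<and> (\<forall>k. s \<in> S k \<longleftrightarrow> k = j)"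
    then obtain j where j: "j < m" "s \<in> S j" "s \<notin> Sl" "\<forall>k. s \<in> S k \<longleftrightarrow> k = j" by blast
    have "Lf s = a j powr \<gamma>" unfolding Lf_def by (rule sum_ind_one[OF j(4) j(1)])
    moreover have "Uf s = a (Suc j) powr \<gamma>" unfolding Uf_def sum_ind_one[OF j(4) j(1)]
      using j(3) by simp
    moreover have "a j < g s" "g s \<le> a (Suc j)" using j(2) unfolding S_def by auto
    then have "a j powr \<gamma> \<le> g s powr \<gamma>" "g s powr \<gamma> \<le> a (Suc j) powr \<gamma>"
      using g01[OF s] gp apos[of j] by (auto intro!: powr_mono2)
    ultimately show ?thesis using aeS[of j] by simp
  qed
  have fin: "emeasure \<Psi> A < \<infinity>" for A by (metis Psi.emeasure_finite infinity_ennreal_def less_top)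
  have intind: "integrable \<Psi> (indicator A :: _ \<Rightarrow> real)" if "A \<in> sets \<Psi>" for A
    using that fin by simp
  have intL: "integrable \<Psi> Lf" unfolding Lf_def[abs_def]
    by (intro Bochner_Integration.integrable_sum integrable_mult_right intind S_Psi)
  have intU: "integrable \<Psi> Uf" unfolding Uf_def[abs_def]
    by (intro Bochner_Integration.integrable_add Bochner_Integration.integrable_sum integrable_mult_right intind S_Psi Sl_Psi)
  have intg: "integrable \<Psi> (\<lambda>s. g s powr \<gamma>)"
  proof (rule Psi.integrable_const_bound[where B=1])
    show "AE s in \<Psi>. norm (g s powr \<gamma>) \<le> 1"
    proof (rule AE_I2)
      fix s assume "s \<in> space \<Psi>"
      then have s: "s \<in> unit_simplex" using space_Psi by simp
      have "g s powr \<gamma> \<le> 1 powr \<gamma>" using g01[OF s] gp by (intro powr_mono2) auto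
      then show "norm (g s powr \<gamma>) \<le> 1" by simp
    qed
    have "(\<lambda>s. g s powr \<gamma>) \<in> borel_measurable borel" by measurable
    then show "(\<lambda>s. g s powr \<gamma>) \<in> borel_measurable \<Psi>" by (rule meas_Psi)
  qed
  have SsubS: "S k \<inter> space \<Psi> = S k" for k using space_Psi unfolding S_def by auto
  have SlsubS: "Sl \<inter> space \<Psi> = Sl" using space_Psi unfolding Sl_def by auto
  define lo where "lo = (\<Sum>k<m. a k powr \<gamma> * measure \<Psi> (S k))"
  define up where "up = a 0 powr \<gamma> * measure \<Psi> Sl + (\<Sum>k<m. a (Suc k) powr \<gamma> * measure \<Psi> (S k))"
  have iterm: "integrable \<Psi> (\<lambda>s. c * indicator (S k) s :: real)" for c :: real and k
    by (intro integrable_mult_right intind S_Psi)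
  have iL: "integral\<^sup>L \<Psi> Lf = lo"
  proof -
    have "integral\<^sup>L \<Psi> Lf = (\<Sum>k<m. integral\<^sup>L \<Psi> (\<lambda>s. a k powr \<gamma> * indicator (S k) s))"
      unfolding Lf_def[abs_def] by (rule Bochner_Integration.integral_sum) (rule iterm)
    also have "\<dots> = lo" unfolding lo_def by (simp only: integral_mult_right_zero Bochner_Integration.integral_indicator SsubS)
    finally show ?thesis .
  qed
  have iU: "integral\<^sup>L \<Psi> Uf = up"
  proof -
    have "integral\<^sup>L \<Psi> Uf = integral\<^sup>L \<Psi> (\<lambda>s. a 0 powr \<gamma> * indicator Sl s) +
        integral\<^sup>L \<Psi> (\<lambda>s. \<Sum>k<m. a (Suc k) powr \<gamma> * indicator (S k) s)"
      unfolding Uf_def[abs_def]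
      by (rule Bochner_Integration.integral_add) (intro integrable_mult_right intind Sl_Psi,
          intro Bochner_Integration.integrable_sum iterm)
    also have "integral\<^sup>L \<Psi> (\<lambda>s. \<Sum>k<m. a (Suc k) powr \<gamma> * indicator (S k) s)
        = (\<Sum>k<m. integral\<^sup>L \<Psi> (\<lambda>s. a (Suc k) powr \<gamma> * indicator (S k) s))"
      by (rule Bochner_Integration.integral_sum) (rule iterm)
    also have "integral\<^sup>L \<Psi> (\<lambda>s. a 0 powr \<gamma> * indicator Sl s) + (\<Sum>k<m. integral\<^sup>L \<Psi> (\<lambda>s. a (Suc k) powr \<gamma> * indicator (S k) s)) = up"
      unfolding up_def by (simp only: integral_mult_right_zero Bochner_Integration.integral_indicator SsubS SlsubS)
    finally show ?thesis .
  qed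
  have "integral\<^sup>L \<Psi> Lf \<le> (\<integral>s. g s powr \<gamma> \<partial>\<Psi>)"
    using pw space_Psi by (intro integral_mono[OF intL intg]) auto
  moreover have "(\<integral>s. g s powr \<gamma> \<partial>\<Psi>) \<le> integral\<^sup>L \<Psi> Uf"
    using pw space_Psi by (intro integral_mono[OF intg intU]) auto
  moreover have "integral\<^sup>L \<Psi> Uf \<le> (\<integral>s. Lf s + \<epsilon> \<partial>\<Psi>)"
    using pw space_Psi by (intro integral_mono[OF intU]) (auto intro: intL)
  moreover have "(\<integral>s. Lf s + \<epsilon> \<partial>\<Psi>) = integral\<^sup>L \<Psi> Lf + \<epsilon>"
    using intL by (simp add: Psi.prob_space)
  ultimately have bnd: "(\<integral>s. g s powr \<gamma> \<partial>\<Psi>) - \<epsilon> \<le> lo" "up \<le> (\<integral>s. g s powr \<gamma> \<partial>\<Psi>) + \<epsilon>"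
    using iL iU by linarith+
  define E where "E x = {\<omega>\<in>space M. L1norm (X \<omega>) * g (X \<omega> /\<^sub>R L1norm (X \<omega>)) > x}" for x
  define A where "A k x = {\<omega>\<in>space M. L1norm (X \<omega>) > (1 / a k) * x \<and> X \<omega> /\<^sub>R L1norm (X \<omega>) \<in> S k}" for k x
  define B where "B k x = {\<omega>\<in>space M. L1norm (X \<omega>) > (1 / a (Suc k)) * x \<and> X \<omega> /\<^sub>R L1norm (X \<omega>) \<in> S k}" for k x
  define Bl where "Bl x = {\<omega>\<in>space M. L1norm (X \<omega>) > (1 / a 0) * x \<and> X \<omega> /\<^sub>R L1norm (X \<omega>) \<in> Sl}" for x
  define fl where "fl x = (\<Sum>k<m. measure M (A k x) / V x)" for x
  define fu where "fu x = measure M (Bl x) / V x + (\<Sum>k<m. measure M (B k x) / V x)" for x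
  have limA: "((\<lambda>x. measure M (A k x) / V x) \<longlongrightarrow> a k powr \<gamma> * measure \<Psi> (S k)) at_top" for k
  proof -
    have "((\<lambda>x. measure M (A k x) / V x) \<longlongrightarrow> (1 / a k) powr (-\<gamma>) * measure \<Psi> (S k)) at_top"
      unfolding A_def V_def by (rule mrv_lim[OF _ S_Psi frS]) (use apos[of k] in simp)
    then show ?thesis by (simp only: inv_powr_neg[OF apos[of k]])
  qed
  have limB: "((\<lambda>x. measure M (B k x) / V x) \<longlongrightarrow> a (Suc k) powr \<gamma> * measure \<Psi> (S k)) at_top" for k
  proof -
    have "((\<lambda>x. measure M (B k x) / V x) \<longlongrightarrow> (1 / a (Suc k)) powr (-\<gamma>) * measure \<Psi> (S k)) at_top"
      unfolding B_def V_def by (rule mrv_lim[OF _ S_Psi frS]) (use apos[of "Suc k"] in simp)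
    then show ?thesis by (simp only: inv_powr_neg[OF apos[of "Suc k"]])
  qed
  have limBl: "((\<lambda>x. measure M (Bl x) / V x) \<longlongrightarrow> a 0 powr \<gamma> * measure \<Psi> Sl) at_top"
  proof -
    have "((\<lambda>x. measure M (Bl x) / V x) \<longlongrightarrow> (1 / a 0) powr (-\<gamma>) * measure \<Psi> Sl) at_top"
      unfolding Bl_def V_def by (rule mrv_lim[OF _ Sl_Psi frSl]) (use a0 in simp)
    then show ?thesis by (simp only: inv_powr_neg[OF a0])
  qed
  have "(fl \<longlongrightarrow> lo) at_top" unfolding fl_def[abs_def] lo_def by (intro tendsto_sum limA)
  moreover have "(fu \<longlongrightarrow> up) at_top" unfolding fu_def[abs_def] up_def by (intro tendsto_add tendsto_sum limB limBl)
  moreover have "eventually (\<lambda>x. fl x \<le> measure M (E x) / V x \<and> measure M (E x) / V x \<le> fu x) at_top"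
    using eventually_conj[OF V_pos eventually_gt_at_top[of 0]]
  proof (rule eventually_mono)
    fix x :: real assume x: "0 < V x \<and> 0 < x"
    have Em: "E x \<in> sets M" unfolding E_def by measurable
    have Am: "A k x \<in> sets M" for k unfolding A_def by (rule event_sets[OF S_borel])
    have Bm: "B k x \<in> sets M" for k unfolding B_def by (rule event_sets[OF S_borel])
    have Blm: "Bl x \<in> sets M" unfolding Bl_def by (rule event_sets[OF Sl_borel])
    have AE: "A k x \<subseteq> E x" for k
    proof
      fix \<omega> assume w: "\<omega> \<in> A k x"
      let ?r = "L1norm (X \<omega>)" and ?t = "X \<omega> /\<^sub>R L1norm (X \<omega>)"
      have h1: "(1 / a k) * x < ?r" and h2: "a k < g ?t" and h3: "\<omega> \<in> space M"
        using w unfolding A_def S_def by auto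
      have "x < ?r * a k" using div_lt_aux2[OF apos h1] .
      moreover have "0 < ?r" using h1 x apos[of k] by (smt (verit) divide_pos_pos mult_pos_pos)
      then have "?r * a k < ?r * g ?t" using h2 by (intro mult_strict_left_mono)
      ultimately show "\<omega> \<in> E x" unfolding E_def using h3 by auto
    qed
    have disj: "disjoint_family_on (\<lambda>k. A k x) {..<m}"
      unfolding disjoint_family_on_def A_def using Sdisj by blast
    have "(\<Sum>k<m. measure M (A k x)) = measure M (\<Union>k<m. A k x)"
      using Am disj by (intro finite_measure_finite_Union[symmetric]) auto
    also have "\<dots> \<le> measure M (E x)" using AE Em by (intro finite_measure_mono) auto
    finally have low: "(\<Sum>k<m. measure M (A k x)) \<le> measure M (E x)" .
    have EB: "E x \<subseteq> Bl x \<union> (\<Union>k<m. B k x)"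
    proof
      fix \<omega> assume w: "\<omega> \<in> E x"
      let ?r = "L1norm (X \<omega>)" and ?t = "X \<omega> /\<^sub>R L1norm (X \<omega>)"
      have h1: "x < ?r * g ?t" and h3: "\<omega> \<in> space M" using w unfolding E_def by auto
      have r0: "0 \<le> ?r" by (rule L1norm_nonneg)
      have "?r \<noteq> 0" using h1 x by auto
      then have rp: "0 < ?r" using r0 by simp
      have ts: "?t \<in> unit_simplex" using theta_simplex[OF h3 rp] .
      have gt0: "0 < g ?t" using h1 x rp by (smt (verit) mult_nonneg_nonpos)
      from classify[OF ts] show "\<omega> \<in> Bl x \<union> (\<Union>k<m. B k x)"
      proof
        assume "?t \<in> Sl \<and> (\<forall>k. ?t \<notin> S k)"
        then have "?t \<in> Sl" "g ?t \<le> a 0" unfolding Sl_def by auto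
        moreover have "(1 / a 0) * x < ?r" using div_lt_aux[OF gt0 \<open>g ?t \<le> a 0\<close> r0 h1] .
        ultimately have "\<omega> \<in> Bl x" unfolding Bl_def using h3 by auto
        then show ?thesis by blast
      next
        assume "\<exists>j<m. ?t \<in> S j \<and> ?t \<notin> Sl \<and> (\<forall>k. ?t \<in> S k \<longleftrightarrow> k = j)"
        then obtain j where j: "j < m" "?t \<in> S j" by blast
        then have "g ?t \<le> a (Suc j)" unfolding S_def by auto
        then have "(1 / a (Suc j)) * x < ?r" using div_lt_aux[OF gt0 _ r0 h1] by blast
        then have "\<omega> \<in> B j x" unfolding B_def using h3 j by auto
        then show ?thesis using j by blast
      qed
    qed
    have "measure M (E x) \<le> measure M (Bl x \<union> (\<Union>k<m. B k x))"
      using EB Blm Bm by (intro finite_measure_mono) auto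
    also have "\<dots> \<le> measure M (Bl x) + measure M (\<Union>k<m. B k x)"
      using Blm Bm by (intro measure_Un_le) auto
    also have "measure M (\<Union>k<m. B k x) \<le> (\<Sum>k<m. measure M (B k x))"
      using Bm by (intro finite_measure_subadditive_finite) auto
    finally have upp: "measure M (E x) \<le> measure M (Bl x) + (\<Sum>k<m. measure M (B k x))" by simp
    have Vp: "0 < V x" using x by simp
    have "fl x = (\<Sum>k<m. measure M (A k x)) / V x" unfolding fl_def by (simp add: sum_divide_distrib)
    also have "\<dots> \<le> measure M (E x) / V x" using low Vp by (intro divide_right_mono) auto
    finally have 1: "fl x \<le> measure M (E x) / V x" .
    have "measure M (E x) / V x \<le> (measure M (Bl x) + (\<Sum>k<m. measure M (B k x))) / V x"
      using upp Vp by (intro divide_right_mono) auto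
    also have "\<dots> = fu x" unfolding fu_def by (simp add: sum_divide_distrib add_divide_distrib)
    finally show "fl x \<le> measure M (E x) / V x \<and> measure M (E x) / V x \<le> fu x" using 1 by simp
  qed
  ultimately show "\<exists>lo up fl fu. (\<integral>s. g s powr \<gamma> \<partial>\<Psi>) - \<epsilon> \<le> lo \<and> up \<le> (\<integral>s. g s powr \<gamma> \<partial>\<Psi>) + \<epsilon> \<and>
     (fl \<longlongrightarrow> lo) at_top \<and> (fu \<longlongrightarrow> up) at_top \<and>
     eventually (\<lambda>x. fl x \<le> measure M {\<omega>\<in>space M. L1norm (X \<omega>) * g (X \<omega> /\<^sub>R L1norm (X \<omega>)) > x} / V x \<and>
       measure M {\<omega>\<in>space M. L1norm (X \<omega>) * g (X \<omega> /\<^sub>R L1norm (X \<omega>)) > x} / V x \<le> fu x) at_top"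
    using bnd unfolding E_def by blast
qed
end

lemma scaled_lim:
  fixes V T :: "real \<Rightarrow> real"
  assumes Vpos: "eventually (\<lambda>x. V x > 0) at_top"
    and Vr: "\<And>t. t > 0 \<Longrightarrow> ((\<lambda>x. V (t*x)/V x) \<longlongrightarrow> t powr (-\<gamma>)) at_top"
    and T: "((\<lambda>x. T x / V x) \<longlongrightarrow> b) at_top" and s: "s > 0"
  shows "((\<lambda>x. T (s*x) / V x) \<longlongrightarrow> b * s powr (-\<gamma>)) at_top"
proof -
  have lim: "filterlim (\<lambda>x. s * x) at_top at_top"
    by (rule filterlim_tendsto_pos_mult_at_top[OF tendsto_const s filterlim_ident])
  have 1: "((\<lambda>x. T (s*x) / V (s*x)) \<longlongrightarrow> b) at_top"
    using filterlim_compose[OF T lim] by simp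
  have 2: "eventually (\<lambda>x. V (s*x) > 0) at_top"
    using lim Vpos unfolding filterlim_iff by blast
  have "eventually (\<lambda>x. (T (s*x) / V (s*x)) * (V (s*x) / V x) = T (s*x) / V x) at_top"
    using 2 by eventually_elim simp
  moreover have "((\<lambda>x. (T (s*x) / V (s*x)) * (V (s*x) / V x)) \<longlongrightarrow> b * s powr (-\<gamma>)) at_top"
    by (intro tendsto_mult 1 Vr s)
  ultimately show ?thesis by (rule Lim_transform_eventually[rotated])
qed

lemma ratio_lim:
  fixes V Tu Tv :: "real \<Rightarrow> real"
  assumes Vpos: "eventually (\<lambda>x. V x > 0) at_top"
    and Vr: "\<And>t. t > 0 \<Longrightarrow> ((\<lambda>x. V (t*x)/V x) \<longlongrightarrow> t powr (-\<gamma>)) at_top"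
    and Tu: "((\<lambda>x. Tu x / V x) \<longlongrightarrow> bu) at_top"
    and Tv: "((\<lambda>x. Tv x / V x) \<longlongrightarrow> bv) at_top" and bv: "bv \<noteq> 0"
    and s: "s > 0" and t: "t > 0"
  shows "((\<lambda>x. Tu (s*x) / Tv (t*x)) \<longlongrightarrow> (bu * s powr (-\<gamma>)) / (bv * t powr (-\<gamma>))) at_top"
proof -
  have 1: "((\<lambda>x. Tu (s*x) / V x) \<longlongrightarrow> bu * s powr (-\<gamma>)) at_top" by (rule scaled_lim[OF Vpos Vr Tu s])
  have 2: "((\<lambda>x. Tv (t*x) / V x) \<longlongrightarrow> bv * t powr (-\<gamma>)) at_top" by (rule scaled_lim[OF Vpos Vr Tv t])
  have "bv * t powr (-\<gamma>) \<noteq> 0" using bv t by simp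
  then have 3: "((\<lambda>x. (Tu (s*x) / V x) / (Tv (t*x) / V x)) \<longlongrightarrow> (bu * s powr (-\<gamma>)) / (bv * t powr (-\<gamma>))) at_top"
    by (intro tendsto_divide 1 2)
  have "eventually (\<lambda>x. (Tu (s*x) / V x) / (Tv (t*x) / V x) = Tu (s*x) / Tv (t*x)) at_top"
    using Vpos by eventually_elim simp
  then show ?thesis using 3 by (rule Lim_transform_eventually[rotated])
qed

context mrv_ctx
begin

lemma tail_inner:
  assumes "\<forall>i. 0 \<le> v $ i \<and> v $ i \<le> 1"
  shows "((\<lambda>x. measure M {\<omega>\<in>space M. v \<bullet> X \<omega> > x} / V x) \<longlongrightarrow> eta \<Psi> \<gamma> v) at_top"
proof -
  have "continuous_on UNIV (\<lambda>s. v \<bullet> s)" by (intro continuous_intros)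
  moreover have "\<And>\<theta>. \<theta>\<in>unit_simplex \<Longrightarrow> 0 \<le> v \<bullet> \<theta> \<and> v \<bullet> \<theta> \<le> 1"
    using inner_simplex_bounds[OF assms] by blast
  ultimately have "((\<lambda>x. measure M {\<omega>\<in>space M. L1norm (X \<omega>) * (v \<bullet> (X \<omega> /\<^sub>R L1norm (X \<omega>))) > x} / V x)
           \<longlongrightarrow> (\<integral>s. (v \<bullet> s) powr \<gamma> \<partial>\<Psi>)) at_top"
    by (rule core)
  then show ?thesis unfolding inner_scale_L1 eta_def .
qed

end

lemma tail_antitone:
  fixes Z :: "'a \<Rightarrow> real"
  assumes "prob_space M" "Z \<in> borel_measurable M" "x \<le> y"
  shows "measure M {\<omega>\<in>space M. Z \<omega> > y} \<le> measure M {\<omega>\<in>space M. Z \<omega> > x}"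
proof -
  interpret prob_space M by fact
  show ?thesis using assms(2,3) by (intro finite_measure_mono) auto
qed

lemma D_bounds:
  fixes Z :: "'a \<Rightarrow> real" and cc c' :: real
  assumes P: "prob_space M" and Zm: "Z \<in> borel_measurable M" and nn: "\<forall>\<omega>\<in>space M. 0 \<le> Z \<omega>"
  defines "A \<equiv> {\<beta> \<in> {0<..<1}. VaR M \<beta> Z \<le> cc}"
  shows "(if A = {} then 1 else Inf A) \<le> measure M {\<omega>\<in>space M. Z \<omega> > cc}"
    and "cc < c' \<Longrightarrow> measure M {\<omega>\<in>space M. Z \<omega> > c'} \<le> (if A = {} then 1 else Inf A)"
proof -
  interpret prob_space M by fact
  define p where "p = measure M {\<omega>\<in>space M. Z \<omega> > cc}"
  have p0: "0 \<le> p" unfolding p_def by simp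
  have bdd: "bdd_below A" unfolding A_def bdd_below_def by (rule exI[of _ 0]) auto
  show "(if A = {} then 1 else Inf A) \<le> measure M {\<omega>\<in>space M. Z \<omega> > cc}"
  proof (cases "p < 1")
    case True
    have sub: "{p<..<1} \<subseteq> A"
    proof
      fix \<beta> assume b: "\<beta> \<in> {p<..<1}"
      then have b01: "0 < \<beta>" "\<beta> < 1" using p0 by auto
      have "VaR M \<beta> Z \<le> cc"
      proof (rule ccontr)
        assume "\<not> VaR M \<beta> Z \<le> cc"
        then have "cc < VaR M \<beta> Z" by simp
        from VaR_props(3)[OF P Zm nn b01 this] have "\<beta> < p" unfolding p_def .
        then show False using b by simp
      qed
      then show "\<beta> \<in> A" unfolding A_def using b01 by simp
    qed
    have ne: "{p<..<1} \<noteq> {}" using True by simp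
    then have "A \<noteq> {}" using sub by blast
    moreover have "Inf A \<le> Inf {p<..<1}" by (rule cInf_superset_mono[OF ne bdd sub])
    moreover have "Inf {p<..<1} = p" using True by (simp add: cInf_greaterThanLessThan)
    ultimately show ?thesis by (simp add: p_def)
  next
    case False
    show ?thesis
    proof (cases "A = {}")
      case True then show ?thesis using False by (simp add: p_def)
    next
      case ne: False
      then obtain \<beta> where "\<beta> \<in> A" by blast
      then have "Inf A \<le> \<beta>" using bdd cInf_lower by blast
      moreover have "\<beta> < 1" using \<open>\<beta> \<in> A\<close> unfolding A_def by auto
      ultimately have "Inf A \<le> \<beta>" "\<beta> < 1" by auto
      then show ?thesis using False ne by (simp add: p_def)
    qed
  qed
  assume cc: "cc < c'"
  show "measure M {\<omega>\<in>space M. Z \<omega> > c'} \<le> (if A = {} then 1 else Inf A)"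
  proof (cases "A = {}")
    case True then show ?thesis by simp
  next
    case False
    have "measure M {\<omega>\<in>space M. Z \<omega> > c'} \<le> Inf A"
    proof (rule cInf_greatest[OF False])
      fix \<beta> assume "\<beta> \<in> A"
      then have b: "0 < \<beta>" "\<beta> < 1" "VaR M \<beta> Z \<le> cc" unfolding A_def by auto
      have "measure M {\<omega>\<in>space M. Z \<omega> > c'} \<le> measure M {\<omega>\<in>space M. Z \<omega> > VaR M \<beta> Z}"
        using b(3) cc by (intro tail_antitone[OF P Zm]) simp
      also have "\<dots> \<le> \<beta>" by (rule VaR_props(2)[OF P Zm nn b(1,2)])
      finally show "measure M {\<omega>\<in>space M. Z \<omega> > c'} \<le> \<beta>" .
    qed
    then show ?thesis using False by simp
  qed
qed

lemma powr_gt_of_gt: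
  fixes x y g :: real
  assumes "0 < g" "0 \<le> x" "x powr g < y powr g" "0 \<le> y"
  shows "x < y"
proof (rule ccontr)
  assume "\<not> x < y"
  then have "y \<le> x" by simp
  from powr_mono2[OF less_imp_le[OF assms(1)] assms(4) this] show False using assms(3) by simp
qed

theorem DQ_abstract:
  fixes M :: "'a measure" and Y :: "'a \<Rightarrow> real^'n" and V :: "real \<Rightarrow> real" and b :: "'n \<Rightarrow> real"
  assumes P: "prob_space M" and Ym[measurable]: "Y \<in> borel_measurable M" and Ynn: "\<forall>\<omega>\<in>space M. \<forall>i. 0 \<le> Y \<omega> $ i"
    and gp: "\<gamma> > 0"
    and Vpos: "eventually (\<lambda>x. V x > 0) at_top"
    and Vr: "\<And>t. t > 0 \<Longrightarrow> ((\<lambda>x. V (t*x)/V x) \<longlongrightarrow> t powr (-\<gamma>)) at_top"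
    and Ti: "\<And>i. ((\<lambda>x. measure M {\<omega>\<in>space M. Y \<omega> $ i > x} / V x) \<longlongrightarrow> b i) at_top"
    and TS: "((\<lambda>x. measure M {\<omega>\<in>space M. (\<Sum>i\<in>UNIV. Y \<omega> $ i) > x} / V x) \<longlongrightarrow> bS) at_top"
    and kpos: "b k > 0"
  shows "((\<lambda>\<alpha>. DQ_VaR M \<alpha> Y) \<longlongrightarrow> bS / (\<Sum>i\<in>UNIV. b i powr (1/\<gamma>)) powr \<gamma>) (at_right 0)"
proof -
  interpret prob_space M by (rule P)
  define T where "T i x = measure M {\<omega>\<in>space M. Y \<omega> $ i > x}" for i x
  define TT where "TT x = measure M {\<omega>\<in>space M. (\<Sum>i\<in>UNIV. Y \<omega> $ i) > x}" for x
  define q where "q i \<alpha> = VaR M \<alpha> (\<lambda>\<omega>. Y \<omega> $ i)" for i \<alpha>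
  define r where "r \<alpha> = q k \<alpha>" for \<alpha>
  define c where "c \<alpha> = (\<Sum>i\<in>UNIV. q i \<alpha>)" for \<alpha>
  define \<rho> where "\<rho> i = (b i / b k) powr (1/\<gamma>)" for i
  define \<theta>0 where "\<theta>0 = (\<Sum>i\<in>UNIV. \<rho> i)"
  have Yi[measurable]: "(\<lambda>\<omega>. Y \<omega> $ i) \<in> borel_measurable M" for i by (rule measurable_compose[OF Ym borel_measurable_nth])
  have Ys[measurable]: "(\<lambda>\<omega>. \<Sum>i\<in>UNIV. Y \<omega> $ i) \<in> borel_measurable M" by measurable
  have Yinn: "\<forall>\<omega>\<in>space M. 0 \<le> Y \<omega> $ i" for i using Ynn by auto
  have Ysnn: "\<forall>\<omega>\<in>space M. 0 \<le> (\<Sum>i\<in>UNIV. Y \<omega> $ i)" using Ynn by (auto intro: sum_nonneg)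
  have Ti': "((\<lambda>x. T i x / V x) \<longlongrightarrow> b i) at_top" for i unfolding T_def by (rule Ti)
  have TS': "((\<lambda>x. TT x / V x) \<longlongrightarrow> bS) at_top" unfolding TT_def by (rule TS)
  have q0: "0 \<le> q i \<alpha>" if "0 < \<alpha>" "\<alpha> < 1" for i \<alpha>
    unfolding q_def by (rule VaR_props(1)[OF P Yi Yinn that])
  have qt: "T i (q i \<alpha>) \<le> \<alpha>" if "0 < \<alpha>" "\<alpha> < 1" for i \<alpha>
    unfolding q_def T_def by (rule VaR_props(2)[OF P Yi Yinn that])
  have qb: "x < q i \<alpha> \<Longrightarrow> \<alpha> < T i x" if "0 < \<alpha>" "\<alpha> < 1" for i \<alpha> x
    unfolding q_def T_def by (rule VaR_props(3)[OF P Yi Yinn that])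
  have Tanti: "x \<le> y \<Longrightarrow> T i y \<le> T i x" for i x y unfolding T_def by (rule tail_antitone[OF P Yi])
  have TTanti: "x \<le> y \<Longrightarrow> TT y \<le> TT x" for x y unfolding TT_def by (rule tail_antitone[OF P Ys])
  have T0: "0 \<le> T i x" for i x unfolding T_def by simp
  have TT0: "0 \<le> TT x" for x unfolding TT_def by simp
  have b0: "0 \<le> b i" for i
  proof (rule tendsto_lowerbound[OF Ti'])
    show "eventually (\<lambda>x. 0 \<le> T i x / V x) at_top" using Vpos by eventually_elim (simp add: T0)
  qed simp
  have Tkpos: "0 < T k x" for x
  proof -
    have "eventually (\<lambda>y. T k y / V y > 0) at_top" using Ti'[of k] kpos by (rule order_tendstoD)
    then obtain N where N: "\<forall>n\<ge>N. T k n / V n > 0" unfolding eventually_at_top_linorder by blast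
    define y where "y = max N x"
    have yN: "y \<ge> N" "y \<ge> x" unfolding y_def by simp_all
    have "T k y / V y > 0" using N yN(1) by blast
    then have "T k y \<noteq> 0" by auto
    then have "T k y > 0" using T0[of k y] by linarith
    then show ?thesis using Tanti[OF yN(2), of k] by linarith
  qed
  have ev01: "eventually (\<lambda>\<alpha>. 0 < \<alpha> \<and> \<alpha> < (1::real)) (at_right 0)"
  proof -
    have "eventually (\<lambda>\<alpha>::real. \<alpha> < 1) (at_right 0)"
      by (rule order_tendstoD(2)[OF tendsto_ident_at]) simp
    from eventually_conj[OF eventually_at_right_less this] show ?thesis by simp
  qed
  have r_inf: "filterlim r at_top (at_right 0)"
    unfolding filterlim_at_top
  proof
    fix Z :: real
    have "eventually (\<lambda>\<alpha>. \<alpha> < T k Z) (at_right 0)"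
      by (rule order_tendstoD(2)[OF tendsto_ident_at]) (rule Tkpos)
    with ev01 show "eventually (\<lambda>\<alpha>. Z \<le> r \<alpha>) (at_right 0)"
    proof eventually_elim
      case (elim \<alpha>)
      show "Z \<le> r \<alpha>"
      proof (rule ccontr)
        assume "\<not> Z \<le> r \<alpha>"
        then have "T k Z \<le> T k (r \<alpha>)" using Tanti by simp
        also have "\<dots> \<le> \<alpha>" unfolding r_def using qt elim by simp
        finally show False using elim by simp
      qed
    qed
  qed
  have rpos: "eventually (\<lambda>\<alpha>. 0 < r \<alpha>) (at_right 0)"
    using r_inf unfolding filterlim_at_top_dense by blast
  have rlim: "((\<lambda>\<alpha>. T u (s * r \<alpha>) / T k (t * r \<alpha>)) \<longlongrightarrow> (b u * s powr (-\<gamma>)) / (b k * t powr (-\<gamma>))) (at_right 0)"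
    if "s > 0" "t > 0" for u s t
    using filterlim_compose[OF ratio_lim[OF Vpos Vr Ti'[of u] Ti'[of k] _ that] r_inf] kpos by simp
  have rlimS: "((\<lambda>\<alpha>. TT (s * r \<alpha>) / T k (t * r \<alpha>)) \<longlongrightarrow> (bS * s powr (-\<gamma>)) / (b k * t powr (-\<gamma>))) (at_right 0)"
    if "s > 0" "t > 0" for s t
    using filterlim_compose[OF ratio_lim[OF Vpos Vr TS' Ti'[of k] _ that] r_inf] kpos by simp
  have \<rho>pow: "\<rho> i powr \<gamma> = b i / b k" for i
    unfolding \<rho>_def using b0[of i] kpos gp by (simp add: powr_inv_powr)
  have \<rho>0: "0 \<le> \<rho> i" for i unfolding \<rho>_def by simp
  have qr: "((\<lambda>\<alpha>. q i \<alpha> / r \<alpha>) \<longlongrightarrow> \<rho> i) (at_right 0)" for i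
  proof (rule order_tendstoI)
    fix y assume y: "y > \<rho> i"
    define l where "l = (\<rho> i + y) / 2"
    have l: "\<rho> i < l" "l < y" "0 < l" using y \<rho>0[of i] unfolding l_def by auto
    have "b i / b k < l powr \<gamma>" using powr_less_mono2[OF gp \<rho>0 l(1)] \<rho>pow by simp
    then have "b i < b k * l powr \<gamma>" using kpos by (simp add: divide_less_eq mult.commute)
    then have "b i * l powr (-\<gamma>) < b k"
      using l(3) by (simp add: powr_minus_divide divide_less_eq)
    then have lt1: "(b i * l powr (-\<gamma>)) / (b k * 1 powr (-\<gamma>)) < 1" using kpos by simp
    have "eventually (\<lambda>\<alpha>. T i (l * r \<alpha>) / T k (1 * r \<alpha>) < 1) (at_right 0)"
      by (rule order_tendstoD(2)[OF rlim[OF l(3)] lt1]) simp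
    with ev01 rpos show "eventually (\<lambda>\<alpha>. q i \<alpha> / r \<alpha> < y) (at_right 0)"
    proof eventually_elim
      case (elim \<alpha>)
      have "q i \<alpha> < y * r \<alpha>"
      proof (rule ccontr)
        assume "\<not> q i \<alpha> < y * r \<alpha>"
        then have "l * r \<alpha> < q i \<alpha>" using l elim by (smt (verit) mult_strict_right_mono)
        then have "\<alpha> < T i (l * r \<alpha>)" using qb elim by blast
        moreover have "T k (r \<alpha>) \<le> \<alpha>" unfolding r_def using qt elim by blast
        ultimately have "T k (r \<alpha>) < T i (l * r \<alpha>)" by simp
        then have "1 < T i (l * r \<alpha>) / T k (r \<alpha>)" using Tkpos[of "r \<alpha>"] by simp
        then show False using elim by simp
      qed
      then show ?case using elim by (simp add: divide_less_eq)
    qed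
  next
    fix y assume y: "y < \<rho> i"
    show "eventually (\<lambda>\<alpha>. y < q i \<alpha> / r \<alpha>) (at_right 0)"
    proof (cases "y < 0")
      case True
      from ev01 rpos show ?thesis
      proof eventually_elim
        case (elim \<alpha>)
        then have "0 \<le> q i \<alpha> / r \<alpha>" using q0 by simp
        then show ?case using True by linarith
      qed
    next
      case False
    define l where "l = (y + \<rho> i) / 2"
    have l: "y < l" "l < \<rho> i" "0 < l" using y False unfolding l_def by auto
    have \<rho>p: "0 < \<rho> i" using l by simp
    define t where "t = l / \<rho> i"
    have t: "0 < t" "t < 1" using l \<rho>p unfolding t_def by auto
    define \<mu> where "\<mu> = (1 + t) / 2"
    have mu: "l / \<rho> i < \<mu>" "\<mu> < 1" "0 < \<mu>" using t unfolding \<mu>_def t_def[symmetric]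
      by (simp_all add: field_simps)
    have "l < \<mu> * \<rho> i" using mu(1) \<rho>p by (simp add: divide_less_eq)
    then have "l / \<mu> < \<rho> i" using mu by (simp add: divide_less_eq mult.commute)
    then have "(l / \<mu>) powr \<gamma> < \<rho> i powr \<gamma>" using l mu gp by (intro powr_less_mono2) auto
    then have "l powr \<gamma> / \<mu> powr \<gamma> < b i / b k" using \<rho>pow by (simp add: powr_divide)
    then have "b k * l powr \<gamma> < b i * \<mu> powr \<gamma>" using kpos mu l
      by (simp add: divide_less_eq less_divide_eq mult.commute mult.left_commute)
    then have gt1: "1 < (b i * l powr (-\<gamma>)) / (b k * \<mu> powr (-\<gamma>))"
      using kpos mu l by (simp add: powr_minus_divide less_divide_eq divide_less_eq mult.commute mult.left_commute)
    have "eventually (\<lambda>\<alpha>. 1 < T i (l * r \<alpha>) / T k (\<mu> * r \<alpha>)) (at_right 0)"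
      by (rule order_tendstoD(1)[OF rlim[OF l(3) mu(3)] gt1])
    with ev01 rpos show ?thesis
    proof eventually_elim
      case (elim \<alpha>)
      have "l * r \<alpha> < q i \<alpha>"
      proof (rule ccontr)
        assume "\<not> l * r \<alpha> < q i \<alpha>"
        then have "T i (l * r \<alpha>) \<le> T i (q i \<alpha>)" using Tanti by simp
        also have "\<dots> \<le> \<alpha>" using qt elim by blast
        also have "\<alpha> < T k (\<mu> * r \<alpha>)" unfolding r_def using mu elim
          by (intro qb) (auto simp: r_def[symmetric] mult_less_cancel_right2)
        finally have "T i (l * r \<alpha>) < T k (\<mu> * r \<alpha>)" .
        then have "T i (l * r \<alpha>) / T k (\<mu> * r \<alpha>) < 1" using Tkpos[of "\<mu> * r \<alpha>"] by simp
        then show False using elim by simp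
      qed
      then have "l < q i \<alpha> / r \<alpha>" using elim by (simp add: less_divide_eq)
      then show ?case using l by simp
    qed
    qed
  qed
  have \<rho>k: "\<rho> k = 1" unfolding \<rho>_def using kpos by simp
  have th0: "1 \<le> \<theta>0" unfolding \<theta>0_def using member_le_sum[of k UNIV \<rho>] \<rho>0 \<rho>k by simp
  have thlim: "((\<lambda>\<alpha>. c \<alpha> / r \<alpha>) \<longlongrightarrow> \<theta>0) (at_right 0)"
  proof -
    have "((\<lambda>\<alpha>. \<Sum>i\<in>UNIV. q i \<alpha> / r \<alpha>) \<longlongrightarrow> \<theta>0) (at_right 0)" unfolding \<theta>0_def by (intro tendsto_sum qr)
    then show ?thesis unfolding c_def by (simp add: sum_divide_distrib)
  qed
  have cr: "r \<alpha> \<le> c \<alpha>" if "0 < \<alpha>" "\<alpha> < 1" for \<alpha>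
    unfolding c_def r_def using q0[OF that] by (intro member_le_sum) auto
  define DQv where "DQv \<alpha> = (let A = {\<beta>\<in>{0<..<1}. VaR M \<beta> (\<lambda>\<omega>. \<Sum>i\<in>UNIV. Y \<omega> $ i) \<le> c \<alpha>} in (if A = {} then 1 else Inf A))" for \<alpha>
  have DQeq: "DQ_VaR M \<alpha> Y = DQv \<alpha> / \<alpha>" for \<alpha> unfolding DQ_VaR_def DQv_def c_def q_def Let_def by simp
  have DQup: "DQv \<alpha> \<le> TT (c \<alpha>)" for \<alpha> unfolding DQv_def Let_def TT_def by (rule D_bounds(1)[OF P Ys Ysnn])
  have DQlo: "c \<alpha> < c' \<Longrightarrow> TT c' \<le> DQv \<alpha>" for \<alpha> c' unfolding DQv_def Let_def TT_def by (rule D_bounds(2)[OF P Ys Ysnn])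
  define F0 where "F0 = bS * \<theta>0 powr (-\<gamma>) / b k"
  have F0eq: "bS / (\<Sum>i\<in>UNIV. b i powr (1/\<gamma>)) powr \<gamma> = F0"
  proof -
    have bi: "b i powr (1/\<gamma>) = b k powr (1/\<gamma>) * \<rho> i" for i
    proof -
      have "b i powr (1/\<gamma>) = (b k * (b i / b k)) powr (1/\<gamma>)" using kpos by simp
      also have "\<dots> = b k powr (1/\<gamma>) * (b i / b k) powr (1/\<gamma>)" using kpos b0[of i] by (intro powr_mult)
      finally show ?thesis unfolding \<rho>_def .
    qed
    have "(\<Sum>i\<in>UNIV. b i powr (1/\<gamma>)) = (\<Sum>i\<in>UNIV. b k powr (1/\<gamma>) * \<rho> i)"
      by (rule sum.cong[OF refl bi])
    also have "\<dots> = b k powr (1/\<gamma>) * \<theta>0" unfolding \<theta>0_def by (simp add: sum_distrib_left)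
    finally have sumeq: "(\<Sum>i\<in>UNIV. b i powr (1/\<gamma>)) = b k powr (1/\<gamma>) * \<theta>0" .
    have "(b k powr (1/\<gamma>) * \<theta>0) powr \<gamma> = (b k powr (1/\<gamma>)) powr \<gamma> * \<theta>0 powr \<gamma>"
      by (intro powr_mult)
    also have "(b k powr (1/\<gamma>)) powr \<gamma> = b k" using kpos gp by (simp add: powr_inv_powr)
    finally have "(\<Sum>i\<in>UNIV. b i powr (1/\<gamma>)) powr \<gamma> = b k * \<theta>0 powr \<gamma>" unfolding sumeq .
    then show ?thesis unfolding F0_def using kpos th0 by (simp add: powr_minus_divide)
  qed
  have evd: "eventually (\<lambda>\<delta>. 0 < \<delta> \<and> \<delta> < (1/2::real)) (at_right 0)"
  proof -
    have "eventually (\<lambda>\<delta>::real. \<delta> < 1/2) (at_right 0)"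
      by (rule order_tendstoD(2)[OF tendsto_ident_at]) simp
    from eventually_conj[OF eventually_at_right_less this] show ?thesis by simp
  qed
  have rbot: "at_right (0::real) \<noteq> bot" by simp
  show ?thesis unfolding F0eq
  proof (rule order_tendstoI)
    fix y assume y: "y < F0"
    define \<phi> where "\<phi> \<delta> = (bS * ((1+\<delta>)*(\<theta>0+\<delta>)) powr (-\<gamma>)) / (b k * (1-\<delta>) powr (-\<gamma>))" for \<delta>
    have "((\<lambda>\<delta>. (bS * ((1+\<delta>)*(\<theta>0+\<delta>)) powr (-\<gamma>)) / (b k * (1-\<delta>) powr (-\<gamma>))) \<longlongrightarrow>
          (bS * ((1+0)*(\<theta>0+0)) powr (-\<gamma>)) / (b k * (1-0) powr (-\<gamma>))) (at_right 0)"
      using th0 kpos by (intro tendsto_intros) auto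
    moreover have "(bS * ((1+0)*(\<theta>0+0)) powr (-\<gamma>)) / (b k * (1-0) powr (-\<gamma>)) = F0"
      unfolding F0_def by simp
    ultimately have "(\<phi> \<longlongrightarrow> F0) (at_right 0)" unfolding \<phi>_def by simp
    then have "eventually (\<lambda>\<delta>. y < \<phi> \<delta>) (at_right 0)" using y by (rule order_tendstoD)
    from eventually_happens'[OF rbot eventually_conj[OF this evd]]
    obtain \<delta> where \<delta>: "y < \<phi> \<delta>" "0 < \<delta>" "\<delta> < 1/2" by blast
    define s where "s = (1+\<delta>)*(\<theta>0+\<delta>)"
    define t where "t = 1 - \<delta>"
    have st: "s > 0" "t > 0" "t < 1" using \<delta> th0 unfolding s_def t_def by auto
    have e1: "eventually (\<lambda>\<alpha>. y < TT (s * r \<alpha>) / T k (t * r \<alpha>)) (at_right 0)"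
      by (rule order_tendstoD(1)[OF rlimS[OF st(1,2)]]) (use \<delta>(1) in \<open>simp add: \<phi>_def s_def t_def\<close>)
    have e2: "eventually (\<lambda>\<alpha>. c \<alpha> / r \<alpha> < \<theta>0 + \<delta>) (at_right 0)"
      by (rule order_tendstoD(2)[OF thlim]) (use \<delta> in simp)
    from ev01 rpos e1 e2 show "eventually (\<lambda>\<alpha>. y < DQ_VaR M \<alpha> Y) (at_right 0)"
    proof eventually_elim
      case (elim \<alpha>)
      have a01: "0 < \<alpha>" "\<alpha> < 1" and rp: "0 < r \<alpha>" using elim by auto
      have cpos: "0 < c \<alpha>" using cr[OF a01] rp by simp
      have "c \<alpha> < (\<theta>0 + \<delta>) * r \<alpha>" using elim rp by (simp add: divide_less_eq)
      then have "(1+\<delta>) * c \<alpha> \<le> s * r \<alpha>" unfolding s_def using \<delta> by (simp add: mult.assoc)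
      then have 1: "TT (s * r \<alpha>) \<le> TT ((1+\<delta>) * c \<alpha>)" by (rule TTanti)
      have "c \<alpha> < (1+\<delta>) * c \<alpha>" using cpos \<delta> by simp
      then have 2: "TT ((1+\<delta>) * c \<alpha>) \<le> DQv \<alpha>" by (rule DQlo)
      have "t * r \<alpha> < q k \<alpha>" using st rp unfolding r_def[symmetric] by simp
      then have 3: "\<alpha> < T k (t * r \<alpha>)" using qb[OF a01] by blast
      have Tp: "0 < T k (t * r \<alpha>)" by (rule Tkpos)
      have DQ0: "0 \<le> DQv \<alpha>" using 2 TT0[of "(1+\<delta>) * c \<alpha>"] by linarith
      have "y < TT (s * r \<alpha>) / T k (t * r \<alpha>)" using elim by simp
      also have "\<dots> \<le> TT ((1+\<delta>) * c \<alpha>) / T k (t * r \<alpha>)" using 1 Tp by (intro divide_right_mono) auto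
      also have "\<dots> \<le> DQv \<alpha> / T k (t * r \<alpha>)" using 2 Tp by (intro divide_right_mono) auto
      also have "\<dots> \<le> DQv \<alpha> / \<alpha>" using 3 DQ0 a01 by (intro divide_left_mono) auto
      finally show ?case unfolding DQeq .
    qed
  next
    fix y assume y: "F0 < y"
    have "((\<lambda>\<delta>. (bS * (\<theta>0-\<delta>) powr (-\<gamma>)) / (b k * 1 powr (-\<gamma>))) \<longlongrightarrow>
          (bS * (\<theta>0-0) powr (-\<gamma>)) / (b k * 1 powr (-\<gamma>))) (at_right 0)"
      using th0 kpos by (intro tendsto_intros) auto
    moreover have "(bS * (\<theta>0-0) powr (-\<gamma>)) / (b k * 1 powr (-\<gamma>)) = F0"
      unfolding F0_def by simp
    ultimately have "((\<lambda>\<delta>. (bS * (\<theta>0-\<delta>) powr (-\<gamma>)) / (b k * 1 powr (-\<gamma>))) \<longlongrightarrow> F0) (at_right 0)" by simp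
    then have "eventually (\<lambda>\<delta>. (bS * (\<theta>0-\<delta>) powr (-\<gamma>)) / (b k * 1 powr (-\<gamma>)) < y) (at_right 0)"
      using y by (rule order_tendstoD)
    from eventually_happens'[OF rbot eventually_conj[OF this evd]]
    obtain \<delta> where \<delta>: "(bS * (\<theta>0-\<delta>) powr (-\<gamma>)) / (b k * 1 powr (-\<gamma>)) < y" "0 < \<delta>" "\<delta> < 1/2" by blast
    have sp: "0 < \<theta>0 - \<delta>" using \<delta> th0 by simp
    have e1: "eventually (\<lambda>\<alpha>. TT ((\<theta>0-\<delta>) * r \<alpha>) / T k (1 * r \<alpha>) < y) (at_right 0)"
      by (rule order_tendstoD(2)[OF rlimS[OF sp zero_less_one]]) (use \<delta>(1) in simp)
    have e2: "eventually (\<lambda>\<alpha>. \<theta>0 - \<delta> < c \<alpha> / r \<alpha>) (at_right 0)"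
      by (rule order_tendstoD(1)[OF thlim]) (use \<delta> in simp)
    from ev01 rpos e1 e2 show "eventually (\<lambda>\<alpha>. DQ_VaR M \<alpha> Y < y) (at_right 0)"
    proof eventually_elim
      case (elim \<alpha>)
      have a01: "0 < \<alpha>" "\<alpha> < 1" and rp: "0 < r \<alpha>" using elim by auto
      have "(\<theta>0 - \<delta>) * r \<alpha> < c \<alpha>" using elim rp by (simp add: less_divide_eq)
      then have 1: "TT (c \<alpha>) \<le> TT ((\<theta>0 - \<delta>) * r \<alpha>)" by (intro TTanti) simp
      have 3: "T k (r \<alpha>) \<le> \<alpha>" unfolding r_def using qt[OF a01] .
      have Tp: "0 < T k (r \<alpha>)" by (rule Tkpos)
      have "DQ_VaR M \<alpha> Y = DQv \<alpha> / \<alpha>" by (rule DQeq)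
      also have "\<dots> \<le> TT (c \<alpha>) / \<alpha>" using DQup a01 by (intro divide_right_mono) auto
      also have "\<dots> \<le> TT (c \<alpha>) / T k (r \<alpha>)" using 3 Tp TT0 by (intro divide_left_mono) auto
      also have "\<dots> \<le> TT ((\<theta>0 - \<delta>) * r \<alpha>) / T k (r \<alpha>)" using 1 Tp by (intro divide_right_mono) auto
      also have "\<dots> < y" using elim by simp
      finally show ?case .
    qed
  qed
qed

lemma eta_axis:
  assumes "0 \<le> a"
  shows "eta \<Psi> \<gamma> (axis i a) = a powr \<gamma> * eta \<Psi> \<gamma> (axis i 1)"
  unfolding eta_def by (simp add: inner_axis' powr_mult)

theorem proposition3:
  fixes M :: "'a measure" and X :: "'a \<Rightarrow> real ^ 'n" and \<gamma> :: real
    and \<Psi> :: "(real ^ 'n) measure" and w :: "real ^ 'n"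
    and f :: "real ^ 'n \<Rightarrow> ennreal"
  assumes "prob_space M" and "atomless M"
    and "X \<in> borel_measurable M"
    and "\<forall>\<omega> \<in> space M. \<forall>i. 0 \<le> X \<omega> $ i"
    and "MRV M X \<gamma> \<Psi>"
    and "distributed M lborel X f"
    and "\<forall>x \<in> support M X. f x > 0"
    and "w \<in> unit_simplex"
    and "eta \<Psi> \<gamma> w > 0"
    and "\<forall>i. eta \<Psi> \<gamma> (axis i 1) > 0"
  shows "((\<lambda>\<alpha>. DQ_VaR M \<alpha> (hadamard w X)) \<longlongrightarrow>
           eta \<Psi> \<gamma> w / (\<Sum>i\<in>UNIV. w $ i * eta \<Psi> \<gamma> (axis i 1) powr (1 / \<gamma>)) powr \<gamma>)
         (at_right 0)"
proof -
  interpret mrv_ctx M X \<gamma> \<Psi> using assms(1,3,4,5) by (rule mrv_ctx.intro)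
  define Y where "Y = hadamard w X"
  have w0: "\<forall>i. 0 \<le> w $ i" and w1: "(\<Sum>i\<in>UNIV. w $ i) = 1" using assms(8) unfolding unit_simplex_def by auto
  have wle: "w $ i \<le> 1" for i using member_le_sum[of i UNIV "\<lambda>i. w $ i"] w0 w1 by simp
  have wsim: "\<forall>i. 0 \<le> w $ i \<and> w $ i \<le> 1" using w0 wle by auto
  have axsim: "\<forall>j. 0 \<le> axis i (w $ i) $ j \<and> axis i (w $ i) $ j \<le> 1" for i
    using wsim by (simp add: axis_def)
  have Yi: "Y \<omega> $ i = axis i (w $ i) \<bullet> X \<omega>" for \<omega> i
    unfolding Y_def hadamard_def by (simp add: inner_axis')
  have Ys: "(\<Sum>i\<in>UNIV. Y \<omega> $ i) = w \<bullet> X \<omega>" for \<omega>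
    unfolding Y_def hadamard_def inner_vec_def by simp
  have "continuous_on UNIV (\<lambda>x::real^'n. \<chi> i. w $ i * x $ i)" by (intro continuous_intros)
  then have "(\<lambda>x::real^'n. \<chi> i. w $ i * x $ i) \<in> borel_measurable borel"
    by (rule borel_measurable_continuous_onI)
  from measurable_compose[OF assms(3) this]
  have Ym: "Y \<in> borel_measurable M" unfolding Y_def hadamard_def .
  have Ynn: "\<forall>\<omega>\<in>space M. \<forall>i. 0 \<le> Y \<omega> $ i"
    using assms(4) w0 unfolding Y_def hadamard_def by simp
  have Ti: "((\<lambda>x. measure M {\<omega>\<in>space M. Y \<omega> $ i > x} / V x) \<longlongrightarrow> eta \<Psi> \<gamma> (axis i (w $ i))) at_top" for i
    unfolding Yi by (rule tail_inner[OF axsim])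
  have TS: "((\<lambda>x. measure M {\<omega>\<in>space M. (\<Sum>i\<in>UNIV. Y \<omega> $ i) > x} / V x) \<longlongrightarrow> eta \<Psi> \<gamma> w) at_top"
    unfolding Ys by (rule tail_inner[OF wsim])
  have "\<exists>k. w $ k > 0"
  proof (rule ccontr)
    assume "\<not> (\<exists>k. w $ k > 0)"
    then have "\<forall>i. w $ i = 0" using w0 by (metis less_eq_real_def)
    then show False using w1 by simp
  qed
  then obtain k where k: "w $ k > 0" by blast
  have eax: "eta \<Psi> \<gamma> (axis i (w $ i)) = w $ i powr \<gamma> * eta \<Psi> \<gamma> (axis i 1)" for i
    by (rule eta_axis) (use w0 in auto)
  have kpos: "eta \<Psi> \<gamma> (axis k (w $ k)) > 0" unfolding eax using k assms(10) by simp
  have main: "((\<lambda>\<alpha>. DQ_VaR M \<alpha> Y) \<longlongrightarrow>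
      eta \<Psi> \<gamma> w / (\<Sum>i\<in>UNIV. eta \<Psi> \<gamma> (axis i (w $ i)) powr (1/\<gamma>)) powr \<gamma>) (at_right 0)"
    by (rule DQ_abstract[OF P Ym Ynn gamma_pos V_pos V_ratio Ti TS kpos])
  have "eta \<Psi> \<gamma> (axis i (w $ i)) powr (1/\<gamma>) = w $ i * eta \<Psi> \<gamma> (axis i 1) powr (1 / \<gamma>)" for i
  proof -
    have "eta \<Psi> \<gamma> (axis i (w $ i)) powr (1/\<gamma>) = (w $ i powr \<gamma>) powr (1/\<gamma>) * eta \<Psi> \<gamma> (axis i 1) powr (1 / \<gamma>)"
      unfolding eax by (rule powr_mult)
    also have "(w $ i powr \<gamma>) powr (1/\<gamma>) = w $ i" using w0 gamma_pos by (simp add: powr_powr powr_one)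
    finally show ?thesis .
  qed
  then show ?thesis using main unfolding Y_def by simp
qed

end
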